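(* Let $s\geq 3$ and $v=3s$. Then there exist a cubic bipartite graph $\Gamma$ on $2s$ vertices, a symmetric configuration $\mathcal{X}$ on $v$ points with strong chromatic number 3, and a strong 3-colouring of $\mathcal{X}$ such that, for each of the three colour classes, the subgraph of the associated graph of $\mathcal{X}$ induced by the points of the other two colour classes is isomorphic to $\Gamma$.
   Context: A symmetric configuration $v_3$ consists of a set of $v$ points and a collection of $v$ blocks, each block being a 3-element subset of the points, such that every point lies in exactly 3 blocks and any two distinct points lie in at most one common block. The associated graph has the points as vertices, two points adjacent iff they lie in a common block. A strong colouring is an assignment of colours to points such that the three points of every block receive three distinct colours; the strong chromatic number is the minimum number of colours in a strong colouring. *)

theory Defs
  imports Main
begin

definition sym_config_v3 :: "'a set \<Rightarrow> 'a set set \<Rightarrow> bool" where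
  "sym_config_v3 P B \<longleftrightarrow>
     finite P \<and> finite B \<and> card B = card P \<and>
     (\<forall>b\<in>B. b \<subseteq> P \<and> card b = 3) \<and>
     (\<forall>p\<in>P. card {b\<in>B. p \<in> b} = 3) \<and>
     (\<forall>p\<in>P. \<forall>q\<in>P. p \<noteq> q \<longrightarrow> card {b\<in>B. p \<in> b \<and> q \<in> b} \<le> 1)"

definition assoc_adj :: "'a set set \<Rightarrow> 'a \<Rightarrow> 'a \<Rightarrow> bool" where
  "assoc_adj B x y \<longleftrightarrow> x \<noteq> y \<and> (\<exists>b\<in>B. x \<in> b \<and> y \<in> b)"

definition strong_colouring :: "'a set \<Rightarrow> 'a set set \<Rightarrow> ('a \<Rightarrow> nat) \<Rightarrow> nat \<Rightarrow> bool" where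
  "strong_colouring P B c k \<longleftrightarrow> c ` P \<subseteq> {..<k} \<and> (\<forall>b\<in>B. inj_on c b)"

definition strong_chromatic_number :: "'a set \<Rightarrow> 'a set set \<Rightarrow> nat" where
  "strong_chromatic_number P B = (LEAST k. \<exists>c. strong_colouring P B c k)"

definition simple_graph :: "'b set \<Rightarrow> ('b \<Rightarrow> 'b \<Rightarrow> bool) \<Rightarrow> bool" where
  "simple_graph V E \<longleftrightarrow> finite V \<and> (\<forall>x y. E x y \<longrightarrow> x \<in> V \<and> y \<in> V \<and> x \<noteq> y \<and> E y x)"

definition cubic_bipartite_graph :: "'b set \<Rightarrow> ('b \<Rightarrow> 'b \<Rightarrow> bool) \<Rightarrow> bool" where
  "cubic_bipartite_graph V E \<longleftrightarrow> simple_graph V E \<and>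
     (\<forall>x\<in>V. card {y\<in>V. E x y} = 3) \<and>
     (\<exists>X Y. X \<union> Y = V \<and> X \<inter> Y = {} \<and>
        (\<forall>x y. E x y \<longrightarrow> (x \<in> X \<and> y \<in> Y) \<or> (x \<in> Y \<and> y \<in> X)))"

definition graph_iso :: "'a set \<Rightarrow> ('a \<Rightarrow> 'a \<Rightarrow> bool) \<Rightarrow> 'b set \<Rightarrow> ('b \<Rightarrow> 'b \<Rightarrow> bool) \<Rightarrow> bool" where
  "graph_iso V1 E1 V2 E2 \<longleftrightarrow> (\<exists>f. bij_betw f V1 V2 \<and>
     (\<forall>x\<in>V1. \<forall>y\<in>V1. E1 x y \<longleftrightarrow> E2 (f x) (f y)))"

definition induced_assoc :: "'a set set \<Rightarrow> 'a set \<Rightarrow> 'a \<Rightarrow> 'a \<Rightarrow> bool" where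
  "induced_assoc B S x y \<longleftrightarrow> x \<in> S \<and> y \<in> S \<and> assoc_adj B x y"

end

theory Submission
  imports Defs
begin

definition off :: "nat \<Rightarrow> nat \<Rightarrow> nat" where
  "off J t = (if J = 0 then 0 else if J = 1 then t else (2*t) mod 3)"

definition blk :: "nat \<Rightarrow> nat \<Rightarrow> nat \<Rightarrow> nat set" where
  "blk s i t = (\<lambda>J. 3 * ((i + off J t) mod s) + J) ` {..<3}"

definition Bs :: "nat \<Rightarrow> nat set set" where
  "Bs s = (\<lambda>(i,t). blk s i t) ` ({..<s} \<times> {..<3})"

lemma ex3: "(\<exists>t<(3::nat). Q t) \<longleftrightarrow> Q 0 \<or> Q 1 \<or> Q 2"
  by (metis less_2_cases_iff less_Suc_eq numeral_3_eq_3 numeral_2_eq_2 One_nat_def)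

lemma off_le: "t < 3 \<Longrightarrow> off J t \<le> 2"
  by (auto simp: off_def)

lemma mem_blk: "p \<in> blk s i t \<longleftrightarrow> p div 3 = (i + off (p mod 3) t) mod s"
proof
  assume "p \<in> blk s i t"
  then obtain J where "J < 3" "p = 3 * ((i + off J t) mod s) + J" unfolding blk_def by auto
  then show "p div 3 = (i + off (p mod 3) t) mod s" by simp
next
  assume h: "p div 3 = (i + off (p mod 3) t) mod s"
  have "p = 3 * (p div 3) + p mod 3" by simp
  then have "p = 3 * ((i + off (p mod 3) t) mod s) + p mod 3" using h by simp
  then show "p \<in> blk s i t" unfolding blk_def by (intro image_eqI[of _ _ "p mod 3"]) auto
qed

lemma eq_mod_iff: "x < s \<Longrightarrow> (x = a mod s) \<longleftrightarrow> int s dvd (int a - int x)"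
proof -
  assume "x < s"
  then have "(x = a mod s) \<longleftrightarrow> x mod s = a mod s" by simp
  also have "\<dots> \<longleftrightarrow> int x mod int s = int a mod int s"
    by (metis of_nat_eq_iff zmod_int)
  also have "\<dots> \<longleftrightarrow> int s dvd (int a - int x)"
    by (metis mod_eq_dvd_iff)
  finally show ?thesis .
qed

lemma small_dvd: "int s dvd (a::int) \<Longrightarrow> \<bar>a\<bar> < int s \<Longrightarrow> a = 0"
proof (rule ccontr)
  assume "int s dvd a" "\<bar>a\<bar> < int s" "a \<noteq> 0"
  then have "\<bar>int s\<bar> \<le> \<bar>a\<bar>" using dvd_imp_le_int by blast
  then show False using \<open>\<bar>a\<bar> < int s\<close> by simp
qed

lemma lt3: "(x::nat) < 3 \<longleftrightarrow> x = 0 \<or> x = 1 \<or> x = 2" by auto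

lemma off_case: "a < 3 \<Longrightarrow> b < 3 \<Longrightarrow> a \<noteq> b \<Longrightarrow> t < 3 \<Longrightarrow> t' < 3 \<Longrightarrow>
   \<bar>int(off a t) - int(off b t) - (int (off a t') - int (off b t'))\<bar> \<le> 2 \<and>
   (int(off a t) - int(off b t) - (int (off a t') - int (off b t')) = 0 \<longrightarrow> t = t')"
  unfolding lt3 by (elim disjE) (simp_all add: off_def)

lemma lin_diff: "(d::int) dvd a \<Longrightarrow> d dvd b \<Longrightarrow> c = a - b \<Longrightarrow> d dvd c" by simp
lemma lin_add: "(d::int) dvd a \<Longrightarrow> d dvd b \<Longrightarrow> c = a + b \<Longrightarrow> d dvd c" by simp
lemma lin_eq: "(d::int) dvd a \<Longrightarrow> c = a \<Longrightarrow> d dvd c" by simp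
lemma lin_neg: "(d::int) dvd a \<Longrightarrow> c = - a \<Longrightarrow> d dvd c" by simp
lemma iso_lemma:
  assumes "bij_betw f W V" "\<And>x y. x \<in> W \<Longrightarrow> y \<in> W \<Longrightarrow> assoc_adj B x y \<longleftrightarrow> assoc_adj B (f x) (f y)"
  shows "graph_iso W (induced_assoc B W) V (induced_assoc B V)"
  unfolding graph_iso_def
proof (intro exI conjI ballI)
  show "bij_betw f W V" by (rule assms(1))
  fix x y assume "x \<in> W" "y \<in> W"
  moreover then have "f x \<in> V" "f y \<in> V" using assms(1) bij_betw_apply by metis+
  ultimately show "induced_assoc B W x y \<longleftrightarrow> induced_assoc B V (f x) (f y)"
    unfolding induced_assoc_def using assms(2) by blast
qed

context fixes s :: nat assumes s3: "s \<ge> 3" begin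

lemma memd: "p div 3 < s \<Longrightarrow> p \<in> blk s i t \<longleftrightarrow> int s dvd (int i + int (off (p mod 3) t) - int (p div 3))"
  unfolding mem_blk by (subst eq_mod_iff) auto

lemma div3: "j < 3 \<Longrightarrow> (3 * x + j) div 3 = (x::nat)" by simp
lemma mod3: "j < 3 \<Longrightarrow> (3 * x + j) mod 3 = (j::nat)" by simp
lemma pdecomp: "p = 3 * (p div 3) + p mod (3::nat)" by simp

lemma pair_blk:
  assumes "i < s" "i' < s" "t < 3" "t' < 3" "p div 3 < s" "q div 3 < s" "p \<noteq> q"
    "p \<in> blk s i t" "q \<in> blk s i t" "p \<in> blk s i' t'" "q \<in> blk s i' t'"
  shows "i = i' \<and> t = t'"
proof -
  let ?a = "p mod 3" and ?b = "q mod 3"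
  have d1: "int s dvd (int i + int (off ?a t) - int (p div 3))" using assms(5,8) memd by blast
  have d2: "int s dvd (int i' + int (off ?a t') - int (p div 3))" using assms(5,10) memd by blast
  have d3: "int s dvd (int i + int (off ?b t) - int (q div 3))" using assms(6,9) memd by blast
  have d4: "int s dvd (int i' + int (off ?b t') - int (q div 3))" using assms(6,11) memd by blast
  have ab: "?a \<noteq> ?b"
  proof
    assume e: "?a = ?b"
    have d3': "int s dvd (int i + int (off ?a t) - int (q div 3))" using d3 e by simp
    have "int s dvd (int (p div 3) - int (q div 3))" by (rule lin_diff[OF d3' d1]) simp
    then have "int (p div 3) - int (q div 3) = 0"
      by (rule small_dvd) (use assms(5,6) in \<open>auto simp: abs_less_iff\<close>)
    then have "p div 3 = q div 3" by simp
    moreover have "p = 3 * (p div 3) + ?a" "q = 3 * (q div 3) + ?b" by simp_all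
    ultimately have "p = q" using e by simp
    then show False using assms(7) by simp
  qed
  have A: "int s dvd (int (off ?a t) - int (off ?a t') - (int i' - int i))"
    by (rule lin_diff[OF d1 d2]) linarith
  have B: "int s dvd (int (off ?b t) - int (off ?b t') - (int i' - int i))"
    by (rule lin_diff[OF d3 d4]) linarith
  have X: "int s dvd (int(off ?a t) - int(off ?b t) - (int (off ?a t') - int (off ?b t')))"
    by (rule lin_diff[OF A B]) linarith
  have oc: "\<bar>int(off ?a t) - int(off ?b t) - (int (off ?a t') - int (off ?b t'))\<bar> \<le> 2 \<and>
   (int(off ?a t) - int(off ?b t) - (int (off ?a t') - int (off ?b t')) = 0 \<longrightarrow> t = t')"
    by (rule off_case) (use ab assms(3,4) in simp_all)
  have "int(off ?a t) - int(off ?b t) - (int (off ?a t') - int (off ?b t')) = 0"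
    by (rule small_dvd[OF X]) (use oc s3 in linarith)
  then have tt: "t = t'" using oc by blast
  have "int s dvd (int i - int i')" by (rule lin_diff[OF d1 d2]) (simp add: tt)
  then have "int i - int i' = 0"
    by (rule small_dvd) (use assms(1,2) in \<open>auto simp: abs_less_iff\<close>)
  then show ?thesis using tt by simp
qed

lemma in_blk_self: "3 * ((i + off J t) mod s) + J \<in> blk s i t" if "J < 3"
  using that unfolding blk_def by auto

lemma blk_inj: assumes "i < s" "i' < s" "t < 3" "t' < 3" "blk s i t = blk s i' t'"
  shows "i = i' \<and> t = t'"
proof -
  have s0: "s > 0" using s3 by simp
  define p where "p = 3 * ((i + off 0 t) mod s) + 0"
  define q where "q = 3 * ((i + off 1 t) mod s) + 1"
  have h1: "p \<in> blk s i t" unfolding p_def by (rule in_blk_self) simp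
  have h2: "q \<in> blk s i t" unfolding q_def by (rule in_blk_self) simp
  have h3: "p div 3 < s" unfolding p_def using s0 by simp
  have "q div 3 = (i + off 1 t) mod s" unfolding q_def by (rule div3) simp
  then have h4: "q div 3 < s" using s0 by simp
  have "p mod 3 = 0" "q mod 3 = 1" unfolding p_def q_def by (rule mod3, simp)+
  then have h5: "p \<noteq> q" by auto
  have h6: "p \<in> blk s i' t'" "q \<in> blk s i' t'" using h1 h2 assms(5) by simp_all
  show ?thesis by (rule pair_blk[OF assms(1-4) h3 h4 h5 h1 h2 h6])
qed


lemma s0: "s > 0" using s3 by simp

lemma dvd_mod1: "int s dvd (int (a mod s) - z) \<longleftrightarrow> int s dvd (int a - z)"
proof -
  have "int (a mod s) = int a mod int s" by (rule of_nat_mod)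
  then show ?thesis by (simp only: dvd_eq_mod_eq_0 mod_diff_left_eq)
qed
lemma dvd_mod2: "int s dvd (z - int (a mod s)) \<longleftrightarrow> int s dvd (z - int a)"
proof -
  have "int (a mod s) = int a mod int s" by (rule of_nat_mod)
  then show ?thesis by (simp only: dvd_eq_mod_eq_0 mod_diff_right_eq)
qed


definition gi :: "nat \<Rightarrow> nat \<Rightarrow> nat" where
  "gi p t = (p div 3 + s - off (p mod 3) t) mod s"

lemma gi_lt: "gi p t < s" unfolding gi_def using s0 by simp

lemma gi_dvd: assumes "t < 3" shows "int s dvd (int (gi p t) - (int (p div 3) - int (off (p mod 3) t)))"
proof -
  have o: "off (p mod 3) t \<le> s" using off_le[OF assms, of "p mod 3"] s3 by linarith
  have "int (p div 3 + s - off (p mod 3) t) = int (p div 3) + int s - int (off (p mod 3) t)"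
    using o by (simp add: of_nat_diff)
  then have "int (p div 3 + s - off (p mod 3) t) - (int (p div 3) - int (off (p mod 3) t)) = int s"
    by simp
  then have "int s dvd (int (p div 3 + s - off (p mod 3) t) - (int (p div 3) - int (off (p mod 3) t)))"
    by simp
  then show ?thesis unfolding gi_def by (subst dvd_mod1) simp
qed

lemma mem_gi: assumes "t < 3" "p < 3 * s" shows "p \<in> blk s (gi p t) t"
proof -
  have "p div 3 < s" using assms by simp
  moreover have "int s dvd (int (gi p t) + int (off (p mod 3) t) - int (p div 3))"
    by (rule lin_eq[OF gi_dvd[OF assms(1), of p]]) simp
  ultimately show ?thesis using memd by blast
qed


lemma blk_in_Bs: "i < s \<Longrightarrow> t < 3 \<Longrightarrow> blk s i t \<in> Bs s"
  unfolding Bs_def by auto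

lemma Bs_cases: assumes "b \<in> Bs s" obtains i t where "i < s" "t < 3" "b = blk s i t"
  using assms unfolding Bs_def by blast

lemma gi_unique: assumes "i < s" "t < 3" "p < 3 * s" "p \<in> blk s i t" shows "i = gi p t"
proof -
  have pd: "p div 3 < s" using assms by simp
  have d1: "int s dvd (int i + int (off (p mod 3) t) - int (p div 3))" using memd[OF pd] assms by blast
  have "int s dvd (int i - int (gi p t))"
    by (rule lin_diff[OF d1 gi_dvd[OF assms(2), of p]]) simp
  then have "int i - int (gi p t) = 0"
    by (rule small_dvd) (use gi_lt[of p t] assms(1) in \<open>auto simp: abs_less_iff\<close>)
  then show ?thesis by simp
qed

lemma blocks_at: assumes "p < 3 * s" shows "{b \<in> Bs s. p \<in> b} = (\<lambda>t. blk s (gi p t) t) ` {..<3}"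
proof
  show "{b \<in> Bs s. p \<in> b} \<subseteq> (\<lambda>t. blk s (gi p t) t) ` {..<3}"
  proof
    fix b assume "b \<in> {b \<in> Bs s. p \<in> b}"
    then have "b \<in> Bs s" "p \<in> b" by auto
    then obtain i t where "i < s" "t < 3" "b = blk s i t" "p \<in> b" by (auto elim: Bs_cases)
    then have "i = gi p t" using gi_unique assms by blast
    then show "b \<in> (\<lambda>t. blk s (gi p t) t) ` {..<3}" using \<open>b = blk s i t\<close> \<open>t < 3\<close> by blast
  qed
  show "(\<lambda>t. blk s (gi p t) t) ` {..<3} \<subseteq> {b \<in> Bs s. p \<in> b}"
  proof
    fix b assume "b \<in> (\<lambda>t. blk s (gi p t) t) ` {..<3}"
    then obtain t where "t < 3" "b = blk s (gi p t) t" by auto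
    then show "b \<in> {b \<in> Bs s. p \<in> b}" using mem_gi[OF _ assms] blk_in_Bs[OF gi_lt] by simp
  qed
qed

lemma card_blocks_at: assumes "p < 3 * s" shows "card {b \<in> Bs s. p \<in> b} = 3"
proof -
  have "inj_on (\<lambda>t. blk s (gi p t) t) {..<3}"
  proof (rule inj_onI)
    fix a b assume "a \<in> {..<(3::nat)}" "b \<in> {..<(3::nat)}" "blk s (gi p a) a = blk s (gi p b) b"
    then show "a = b" using blk_inj[OF gi_lt gi_lt, of a b] by simp
  qed
  then show ?thesis unfolding blocks_at[OF assms] by (simp add: card_image)
qed

lemma finite_Bs: "finite (Bs s)" unfolding Bs_def by simp

lemma card_Bs: "card (Bs s) = 3 * s"
proof -
  have "inj_on (\<lambda>(i,t). blk s i t) ({..<s} \<times> {..<3})"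
  proof (rule inj_onI)
    fix x y assume "x \<in> {..<s} \<times> {..<(3::nat)}" "y \<in> {..<s} \<times> {..<(3::nat)}"
      "(\<lambda>(i,t). blk s i t) x = (\<lambda>(i,t). blk s i t) y"
    then show "x = y"
    proof (cases x, cases y)
      fix a b a' b' assume xy: "x = (a,b)" "y = (a',b')"
      then have "a < s" "b < 3" "a' < s" "b' < 3" "blk s a b = blk s a' b'"
        using \<open>x \<in> _\<close> \<open>y \<in> _\<close> \<open>(\<lambda>(i,t). blk s i t) x = _\<close> by auto
      then show "x = y" using blk_inj[of a a' b b'] xy by simp
    qed
  qed
  then show ?thesis unfolding Bs_def by (simp add: card_image card_cartesian_product)
qed

lemma pair_card: assumes "p < 3 * s" "q < 3 * s" "p \<noteq> q"
  shows "card {b \<in> Bs s. p \<in> b \<and> q \<in> b} \<le> 1"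
proof -
  have "\<forall>b1\<in>{b \<in> Bs s. p \<in> b \<and> q \<in> b}. \<forall>b2\<in>{b \<in> Bs s. p \<in> b \<and> q \<in> b}. b1 = b2"
  proof (intro ballI)
    fix b1 b2 assume h: "b1 \<in> {b \<in> Bs s. p \<in> b \<and> q \<in> b}" "b2 \<in> {b \<in> Bs s. p \<in> b \<and> q \<in> b}"
    then have "b1 \<in> Bs s" "b2 \<in> Bs s" by auto
    then obtain i t i' t' where it: "i < s" "t < 3" "b1 = blk s i t" "i' < s" "t' < 3" "b2 = blk s i' t'"
      by (metis Bs_cases)
    have "p div 3 < s" "q div 3 < s" using assms by auto
    then have "i = i' \<and> t = t'" using pair_blk[OF it(1,4,2,5) _ _ assms(3)] h it by simp
    then show "b1 = b2" using it by simp
  qed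
  then show ?thesis using card_le_Suc0_iff_eq[of "{b \<in> Bs s. p \<in> b \<and> q \<in> b}"] finite_Bs by auto
qed

lemma blk_mod_inj: "x \<in> blk s i t \<Longrightarrow> y \<in> blk s i t \<Longrightarrow> x mod 3 = y mod 3 \<Longrightarrow> x = y"
proof -
  assume a: "x \<in> blk s i t" "y \<in> blk s i t" "x mod 3 = y mod 3"
  then have "x div 3 = y div 3" unfolding mem_blk by simp
  then show "x = y" using a(3) pdecomp by metis
qed

lemma blk_sub: "blk s i t \<subseteq> {..<3 * s}"
proof
  fix x assume "x \<in> blk s i t"
  then have "x div 3 < s" using mem_blk s0 by simp
  then show "x \<in> {..<3 * s}" by simp
qed

lemma card_blk: "card (blk s i t) = 3"
proof -
  have "inj_on (\<lambda>J. 3 * ((i + off J t) mod s) + J) {..<3}"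
  proof (rule inj_onI)
    fix a b assume "a \<in> {..<(3::nat)}" "b \<in> {..<(3::nat)}"
      "3 * ((i + off a t) mod s) + a = 3 * ((i + off b t) mod s) + b"
    then show "a = b" using mod3 by (metis lessThan_iff)
  qed
  then show ?thesis unfolding blk_def by (simp add: card_image)
qed


lemma adj_iff: assumes "p < 3 * s" "q < 3 * s"
  shows "assoc_adj (Bs s) p q \<longleftrightarrow> p mod 3 \<noteq> q mod 3 \<and>
    (\<exists>t<3. int s dvd (int (q div 3) - int (p div 3) - (int (off (q mod 3) t) - int (off (p mod 3) t))))"
proof
  have pd: "p div 3 < s" "q div 3 < s" using assms by auto
  assume "assoc_adj (Bs s) p q"
  then obtain b where b: "p \<noteq> q" "b \<in> Bs s" "p \<in> b" "q \<in> b" unfolding assoc_adj_def by auto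
  then obtain i t where it: "i < s" "t < 3" "b = blk s i t" by (auto elim: Bs_cases)
  have m: "p mod 3 \<noteq> q mod 3" using blk_mod_inj b it by blast
  have dp: "int s dvd (int i + int (off (p mod 3) t) - int (p div 3))" using memd[OF pd(1)] b it by blast
  have dq: "int s dvd (int i + int (off (q mod 3) t) - int (q div 3))" using memd[OF pd(2)] b it by blast
  have "int s dvd (int (q div 3) - int (p div 3) - (int (off (q mod 3) t) - int (off (p mod 3) t)))"
    by (rule lin_diff[OF dp dq]) simp
  then show "p mod 3 \<noteq> q mod 3 \<and>
    (\<exists>t<3. int s dvd (int (q div 3) - int (p div 3) - (int (off (q mod 3) t) - int (off (p mod 3) t))))"
    using m it by blast
next
  have pd: "p div 3 < s" "q div 3 < s" using assms by auto
  assume "p mod 3 \<noteq> q mod 3 \<and>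
    (\<exists>t<3. int s dvd (int (q div 3) - int (p div 3) - (int (off (q mod 3) t) - int (off (p mod 3) t))))"
  then obtain t where t: "p mod 3 \<noteq> q mod 3" "t < 3"
    "int s dvd (int (q div 3) - int (p div 3) - (int (off (q mod 3) t) - int (off (p mod 3) t)))" by auto
  have "int s dvd (int (gi p t) + int (off (q mod 3) t) - int (q div 3))"
    by (rule lin_diff[OF gi_dvd[OF t(2), of p] t(3)]) simp
  then have "q \<in> blk s (gi p t) t" using memd[OF pd(2)] by blast
  moreover have "p \<in> blk s (gi p t) t" using mem_gi t assms by blast
  moreover have "blk s (gi p t) t \<in> Bs s" using blk_in_Bs gi_lt t by blast
  moreover have "p \<noteq> q" using t by auto
  ultimately show "assoc_adj (Bs s) p q" unfolding assoc_adj_def by blast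
qed

lemma adj_sym: "assoc_adj B p q \<Longrightarrow> assoc_adj B q p" unfolding assoc_adj_def by auto

lemma colouring: "strong_colouring {..<3*s} (Bs s) (\<lambda>p. p mod 3) 3"
  unfolding strong_colouring_def
proof
  show "(\<lambda>p. p mod 3) ` {..<3 * s} \<subseteq> {..<3}" by auto
  show "\<forall>b\<in>Bs s. inj_on (\<lambda>p. p mod 3) b"
    by (auto elim!: Bs_cases intro!: inj_onI dest: blk_mod_inj)
qed

lemma chrom: "strong_chromatic_number {..<3*s} (Bs s) = 3"
  unfolding strong_chromatic_number_def
proof (rule Least_equality)
  show "\<exists>c. strong_colouring {..<3 * s} (Bs s) c 3" using colouring by blast
next
  fix k assume "\<exists>c. strong_colouring {..<3 * s} (Bs s) c k"
  then obtain c where c: "c ` {..<3 * s} \<subseteq> {..<k}" "\<forall>b\<in>Bs s. inj_on c b"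
    unfolding strong_colouring_def by blast
  have b: "blk s 0 0 \<in> Bs s" using blk_in_Bs s0 by simp
  then have "inj_on c (blk s 0 0)" using c(2) by blast
  then have "card (c ` blk s 0 0) = 3" using card_blk[of 0 0] card_image by metis
  moreover have sub: "c ` blk s 0 0 \<subseteq> {..<k}" using c(1) blk_sub[of 0 0] by (meson image_mono order_trans)
  moreover have "card (c ` blk s 0 0) \<le> card {..<k}" by (rule card_mono) (simp_all add: sub)
  ultimately show "3 \<le> k" by simp
qed

lemma config: "sym_config_v3 {..<3*s} (Bs s)"
  unfolding sym_config_v3_def
proof (intro conjI ballI impI)
  show "finite {..<3 * s}" by simp
  show "finite (Bs s)" by (rule finite_Bs)
  show "card (Bs s) = card {..<3 * s}" using card_Bs by simp
  fix b assume "b \<in> Bs s"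
  then show "b \<subseteq> {..<3 * s}" "card b = 3" using blk_sub card_blk by (auto elim!: Bs_cases)
next
  fix p assume "p \<in> {..<3 * s}"
  then show "card {b \<in> Bs s. p \<in> b} = 3" using card_blocks_at by simp
next
  fix p q assume "p \<in> {..<3 * s}" "q \<in> {..<3 * s}" "p \<noteq> q"
  then show "card {b \<in> Bs s. p \<in> b \<and> q \<in> b} \<le> 1" using pair_card by simp
qed


lemma dvd_ms1: "int s dvd (int (a mod s) - b - c) \<longleftrightarrow> int s dvd (int a - b - c)"
proof -
  have "int s dvd (int (a mod s) - b - c) \<longleftrightarrow> int s dvd (int (a mod s) - (b + c))" by (simp add: algebra_simps)
  also have "\<dots> \<longleftrightarrow> int s dvd (int a - (b + c))" by (rule dvd_mod1)
  finally show ?thesis by (simp add: algebra_simps)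
qed

lemma dvd_ms2: "int s dvd (b - int (a mod s) - c) \<longleftrightarrow> int s dvd (b - int a - c)"
proof -
  have "int s dvd (b - int (a mod s) - c) \<longleftrightarrow> int s dvd ((b - c) - int (a mod s))" by (simp add: algebra_simps)
  also have "\<dots> \<longleftrightarrow> int s dvd ((b - c) - int a)" by (rule dvd_mod2)
  finally show ?thesis by (simp add: algebra_simps)
qed

lemma nbrs: assumes x: "x < 3 * s" "x mod 3 \<noteq> 2"
  shows "card {y \<in> {p \<in> {..<3*s}. p mod 3 \<noteq> 2}. induced_assoc (Bs s) {p \<in> {..<3*s}. p mod 3 \<noteq> 2} x y} = 3"
proof -
  let ?V = "{p \<in> {..<3*s}. p mod 3 \<noteq> 2}"
  define J where "J = 1 - x mod 3"
  have J: "J < 3" "J \<noteq> 2" "J \<noteq> x mod 3" "x mod 3 < 3" unfolding J_def using x(2) by presburger+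
  define h where "h t = 3 * ((gi x t + off J t) mod s) + J" for t
  have hd: "h t div 3 = (gi x t + off J t) mod s" for t unfolding h_def using J by simp
  have hm: "h t mod 3 = J" for t unfolding h_def using J by simp
  have xd: "x div 3 < s" using x by simp
  have xV: "x \<in> ?V" using x by simp
  have "{y \<in> ?V. induced_assoc (Bs s) ?V x y} = h ` {..<3}"
  proof
    show "{y \<in> ?V. induced_assoc (Bs s) ?V x y} \<subseteq> h ` {..<3}"
    proof
      fix y assume "y \<in> {y \<in> ?V. induced_assoc (Bs s) ?V x y}"
      then have y: "y < 3 * s" "y mod 3 \<noteq> 2" "assoc_adj (Bs s) x y"
        unfolding induced_assoc_def by auto
      then obtain t where t: "y mod 3 \<noteq> x mod 3" "t < 3"
        "int s dvd (int (y div 3) - int (x div 3) - (int (off (y mod 3) t) - int (off (x mod 3) t)))"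
        using adj_iff[OF x(1) y(1)] y(3) by auto
      have yJ: "y mod 3 = J" using t(1) y(2) x(2) unfolding J_def by presburger
      have yd: "y div 3 < s" using y by simp
      have "int s dvd (int (gi x t + off J t) - int (y div 3))"
        by (rule lin_diff[OF gi_dvd[OF t(2), of x] t(3)]) (simp add: yJ)
      then have "y div 3 = (gi x t + off J t) mod s" using eq_mod_iff[OF yd] by blast
      then have "y = h t" unfolding h_def using yJ pdecomp[of y] by simp
      then show "y \<in> h ` {..<3}" using t(2) by simp
    qed
  next
    show "h ` {..<3} \<subseteq> {y \<in> ?V. induced_assoc (Bs s) ?V x y}"
    proof
      fix y assume "y \<in> h ` {..<3}"
      then obtain t where t: "t < 3" "y = h t" by auto
      have yd: "y div 3 < s" using t hd s0 by simp
      then have y3: "y < 3 * s" by simp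
      have ym: "y mod 3 = J" using t hm by simp
      have "int s dvd (int (gi x t + off J t) - int (x div 3) - (int (off J t) - int (off (x mod 3) t)))"
        by (rule lin_eq[OF gi_dvd[OF t(1), of x]]) simp
      then have "int s dvd (int (y div 3) - int (x div 3) - (int (off (y mod 3) t) - int (off (x mod 3) t)))"
        unfolding t(2) hd hm by (simp only: dvd_ms1)
      then have "assoc_adj (Bs s) x y" using adj_iff[OF x(1) y3] ym J t(1) by auto
      then show "y \<in> {y \<in> ?V. induced_assoc (Bs s) ?V x y}"
        using xV y3 ym J unfolding induced_assoc_def by auto
    qed
  qed
  moreover have "inj_on h {..<3}"
  proof (rule inj_onI)
    fix a b assume ab: "a \<in> {..<(3::nat)}" "b \<in> {..<(3::nat)}" "h a = h b"
    then have "(gi x a + off J a) mod s = (gi x b + off J b) mod s" using hd by metis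
    then have "int (gi x a + off J a) mod int s = int (gi x b + off J b) mod int s"
      by (metis of_nat_mod)
    then have D: "int s dvd (int (gi x a + off J a) - int (gi x b + off J b))"
      by (simp only: mod_eq_dvd_iff)
    have D2: "int s dvd (int (off J a) - int (off (x mod 3) a) + int (x div 3) - int (gi x b) - int (off J b))"
      by (rule lin_diff[OF D gi_dvd[of a x]]) (use ab in simp_all)
    have D3: "int s dvd (int(off J a) - int(off (x mod 3) a) - (int (off J b) - int (off (x mod 3) b)))"
      by (rule lin_add[OF D2 gi_dvd[of b x]]) (use ab in simp_all)
    have oc: "\<bar>int(off J a) - int(off (x mod 3) a) - (int (off J b) - int (off (x mod 3) b))\<bar> \<le> 2 \<and>
      (int(off J a) - int(off (x mod 3) a) - (int (off J b) - int (off (x mod 3) b)) = 0 \<longrightarrow> a = b)"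
      by (rule off_case) (use J ab in simp_all)
    have "int(off J a) - int(off (x mod 3) a) - (int (off J b) - int (off (x mod 3) b)) = 0"
      by (rule small_dvd[OF D3]) (use oc s3 in linarith)
    then show "a = b" using oc by blast
  qed
  ultimately show ?thesis by (simp add: card_image)
qed


lemma cubic: "cubic_bipartite_graph {p \<in> {..<3*s}. p mod 3 \<noteq> 2}
   (induced_assoc (Bs s) {p \<in> {..<3*s}. p mod 3 \<noteq> 2})"
  unfolding cubic_bipartite_graph_def
proof (intro conjI)
  let ?V = "{p \<in> {..<3*s}. p mod 3 \<noteq> 2}"
  show "simple_graph ?V (induced_assoc (Bs s) ?V)"
    unfolding simple_graph_def induced_assoc_def assoc_adj_def by auto
  show "\<forall>x\<in>?V. card {y \<in> ?V. induced_assoc (Bs s) ?V x y} = 3"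
    using nbrs by auto
  show "\<exists>X Y. X \<union> Y = ?V \<and> X \<inter> Y = {} \<and>
     (\<forall>x y. induced_assoc (Bs s) ?V x y \<longrightarrow> x \<in> X \<and> y \<in> Y \<or> x \<in> Y \<and> y \<in> X)"
  proof (intro exI conjI allI impI)
    show "{p \<in> ?V. p mod 3 = 0} \<union> {p \<in> ?V. p mod 3 = 1} = ?V" by auto
    show "{p \<in> ?V. p mod 3 = 0} \<inter> {p \<in> ?V. p mod 3 = 1} = {}" by auto
    fix x y assume e: "induced_assoc (Bs s) ?V x y"
    then have xy: "x \<in> ?V" "y \<in> ?V" "assoc_adj (Bs s) x y" unfolding induced_assoc_def by auto
    then have "x mod 3 \<noteq> y mod 3" using adj_iff[of x y] by auto
    then show "x \<in> {p \<in> ?V. p mod 3 = 0} \<and> y \<in> {p \<in> ?V. p mod 3 = 1} \<or>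
               x \<in> {p \<in> ?V. p mod 3 = 1} \<and> y \<in> {p \<in> ?V. p mod 3 = 0}"
      using xy by auto
  qed
qed

lemma card_V: "card {p \<in> {..<3*s}. p mod 3 \<noteq> 2} = 2 * s"
proof -
  define g where "g = (\<lambda>(I::nat, J::nat). 3 * I + J)"
  have "{p \<in> {..<3*s}. p mod 3 \<noteq> 2} = g ` ({..<s} \<times> {..<2})"
  proof
    show "g ` ({..<s} \<times> {..<2}) \<subseteq> {p \<in> {..<3*s}. p mod 3 \<noteq> 2}"
    proof
      fix p assume "p \<in> g ` ({..<s} \<times> {..<2})"
      then obtain I J where "I < s" "J < 2" "p = 3 * I + J" unfolding g_def by auto
      then show "p \<in> {p \<in> {..<3*s}. p mod 3 \<noteq> 2}" by simp
    qed
    show "{p \<in> {..<3*s}. p mod 3 \<noteq> 2} \<subseteq> g ` ({..<s} \<times> {..<2})"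
    proof
      fix p assume p: "p \<in> {p \<in> {..<3*s}. p mod 3 \<noteq> 2}"
      have "p mod 3 \<noteq> 2" using p by simp
      then have "p mod 3 < 2" by presburger
      moreover have "p = g (p div 3, p mod 3)" unfolding g_def by simp
      moreover have "p div 3 < s" using p by auto
      ultimately show "p \<in> g ` ({..<s} \<times> {..<2})" by blast
    qed
  qed
  moreover have "inj_on g ({..<s} \<times> {..<2})"
  proof (rule inj_onI)
    fix x y assume xy: "x \<in> {..<s} \<times> {..<(2::nat)}" "y \<in> {..<s} \<times> {..<(2::nat)}" "g x = g y"
    obtain a b c d where "x = (a, b)" "y = (c, d)" by fastforce
    then have "b < 3" "d < 3" "3 * a + b = 3 * c + d" using xy unfolding g_def by auto
    then have "a = c" "b = d" using div3 mod3 by metis+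
    then show "x = y" using \<open>x = (a, b)\<close> \<open>y = (c, d)\<close> by simp
  qed
  ultimately show ?thesis by (simp add: card_image card_cartesian_product)
qed


definition f1 :: "nat \<Rightarrow> nat" where "f1 p = (if p mod 3 = 2 then p - 1 else p)"
definition f1' :: "nat \<Rightarrow> nat" where "f1' q = (if q mod 3 = 1 then q + 1 else q)"

lemma iso1: "graph_iso {p \<in> {..<3*s}. p mod 3 \<noteq> 1} (induced_assoc (Bs s) {p \<in> {..<3*s}. p mod 3 \<noteq> 1})
   {p \<in> {..<3*s}. p mod 3 \<noteq> 2} (induced_assoc (Bs s) {p \<in> {..<3*s}. p mod 3 \<noteq> 2})"
proof (rule iso_lemma)
  have A: "f1 p < 3 * s \<and> f1 p mod 3 \<noteq> 2 \<and> f1' (f1 p) = p \<and>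
      f1 p div 3 = p div 3 \<and> f1 p mod 3 = (if p mod 3 = 2 then 1 else 0) \<and> (p mod 3 = 0 \<or> p mod 3 = 2)"
    if p: "p < 3 * s" "p mod 3 \<noteq> 1" for p
  proof (cases "p mod 3 = 2")
    case True
    then have "f1 p = p - 1" unfolding f1_def by simp
    have pe: "p = 3 * (p div 3) + 2" using True pdecomp[of p] by simp
    then have pm: "p - 1 = 3 * (p div 3) + 1" by linarith
    have "(3 * (p div 3) + 1) mod 3 = 1" "(3 * (p div 3) + 1) div 3 = p div 3" by simp_all
    then have "(p - 1) mod 3 = 1" "(p - 1) div 3 = p div 3" using pm by simp_all
    moreover have "p - 1 < 3 * s" using p by simp
    moreover have "p - 1 + 1 = p" using pe by linarith
    ultimately show ?thesis unfolding f1'_def using True \<open>f1 p = p - 1\<close> by simp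
  next
    case False
    have "p mod 3 < 3" by simp
    then have "p mod 3 = 0" using p False by linarith
    moreover have "f1 p = p" unfolding f1_def using False by simp
    ultimately show ?thesis unfolding f1'_def using p by simp
  qed
  have B: "f1' q < 3 * s \<and> f1' q mod 3 \<noteq> 1 \<and> f1 (f1' q) = q"
    if q: "q < 3 * s" "q mod 3 \<noteq> 2" for q
  proof (cases "q mod 3 = 1")
    case True
    then have "f1' q = q + 1" unfolding f1'_def by simp
    have qe: "q = 3 * (q div 3) + 1" using True pdecomp[of q] by simp
    have qd: "q div 3 < s" using q by simp
    have q1: "q + 1 = 3 * (q div 3) + 2" using qe by linarith
    have "(q + 1) mod 3 = 2" unfolding q1 by (rule mod3) simp
    moreover have "q + 1 < 3 * s" using qe qd by linarith
    ultimately show ?thesis unfolding f1_def using \<open>f1' q = q + 1\<close> by simp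
  next
    case False
    then show ?thesis unfolding f1_def f1'_def using q by simp
  qed
  show "bij_betw f1 {p \<in> {..<3*s}. p mod 3 \<noteq> 1} {p \<in> {..<3*s}. p mod 3 \<noteq> 2}"
  proof (rule bij_betw_byWitness[where f' = f1'])
    show "\<forall>a\<in>{p \<in> {..<3*s}. p mod 3 \<noteq> 1}. f1' (f1 a) = a" using A by auto
    show "\<forall>a\<in>{p \<in> {..<3*s}. p mod 3 \<noteq> 2}. f1 (f1' a) = a" using B by auto
    show "f1 ` {p \<in> {..<3*s}. p mod 3 \<noteq> 1} \<subseteq> {p \<in> {..<3*s}. p mod 3 \<noteq> 2}" using A by auto
    show "f1' ` {p \<in> {..<3*s}. p mod 3 \<noteq> 2} \<subseteq> {p \<in> {..<3*s}. p mod 3 \<noteq> 1}" using B by auto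
  qed
  fix x y assume x: "x \<in> {p \<in> {..<3*s}. p mod 3 \<noteq> 1}" and y: "y \<in> {p \<in> {..<3*s}. p mod 3 \<noteq> 1}"
  have px: "f1 x < 3 * s" "x < 3 * s" "x mod 3 = 0 \<or> x mod 3 = 2" using A[of x] x by auto
  have py: "f1 y < 3 * s" "y < 3 * s" "y mod 3 = 0 \<or> y mod 3 = 2" using A[of y] y by auto
  have c0: "f1 p div 3 = p div 3" "f1 p mod 3 = 0" if "p < 3 * s" "p mod 3 = 0" for p
    using A[of p] that by auto
  have c2: "f1 p div 3 = p div 3" "f1 p mod 3 = 1" if "p < 3 * s" "p mod 3 = 2" for p
    using A[of p] that by auto
  show "assoc_adj (Bs s) x y \<longleftrightarrow> assoc_adj (Bs s) (f1 x) (f1 y)"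
    using px(3) py(3)
  proof (elim disjE)
    assume xm: "x mod 3 = 0" and ym: "y mod 3 = 0"
    show ?thesis unfolding adj_iff[OF px(2) py(2)] adj_iff[OF px(1) py(1)]
      c0[OF px(2) xm] c0[OF py(2) ym] xm ym by simp
  next
    assume xm: "x mod 3 = 2" and ym: "y mod 3 = 2"
    show ?thesis unfolding adj_iff[OF px(2) py(2)] adj_iff[OF px(1) py(1)]
      c2[OF px(2) xm] c2[OF py(2) ym] xm ym by simp
  next
    assume xm: "x mod 3 = 0" and ym: "y mod 3 = 2"
    show ?thesis unfolding adj_iff[OF px(2) py(2)] adj_iff[OF px(1) py(1)]
      c0[OF px(2) xm] c2[OF py(2) ym] xm ym
      by (auto simp: ex3 off_def algebra_simps)
  next
    assume xm: "x mod 3 = 2" and ym: "y mod 3 = 0"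
    show ?thesis unfolding adj_iff[OF px(2) py(2)] adj_iff[OF px(1) py(1)]
      c2[OF px(2) xm] c0[OF py(2) ym] xm ym
      by (auto simp: ex3 off_def algebra_simps)
  qed
qed

lemma modA1: "A < s \<Longrightarrow> ((A + 1) mod s + s - 1) mod s = A"
proof (cases "A + 1 < s")
  case True
  assume a: "A < s"
  have "(A + 1) mod s = A + 1" using True by (rule mod_less)
  then have "(A + 1) mod s + s - 1 = A + s" by linarith
  moreover have "(A + s) mod s = A mod s" by (rule mod_add_self2)
  moreover have "A mod s = A" using a by (rule mod_less)
  ultimately show ?thesis by simp
next
  case False
  assume a: "A < s"
  then have e: "A + 1 = s" using False by linarith
  then have "(A + 1) mod s = 0" by simp
  then have "(A + 1) mod s + s - 1 = A" using e by linarith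
  moreover have "A mod s = A" using a by (rule mod_less)
  ultimately show ?thesis by simp
qed

lemma modA2: "B < s \<Longrightarrow> ((B + s - 1) mod s + 1) mod s = B"
proof (cases "B = 0")
  case True
  have "s - 1 < s" using s0 by linarith
  then have "(s - 1) mod s = s - 1" by (rule mod_less)
  then have "(B + s - 1) mod s + 1 = s" using True s0 by simp
  then show ?thesis using True by simp
next
  case False
  assume a: "B < s"
  then have "B + s - 1 = (B - 1) + s" using False by linarith
  moreover have "((B - 1) + s) mod s = (B - 1) mod s" by (rule mod_add_self2)
  moreover have "(B - 1) mod s = B - 1" using a by simp
  ultimately have "(B + s - 1) mod s + 1 = B" using False by simp
  then show ?thesis using a by simp
qed


definition f0 :: "nat \<Rightarrow> nat" where
  "f0 p = (if p mod 3 = 1 then p - 1 else 3 * ((p div 3 + 1) mod s) + 1)"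
definition f0' :: "nat \<Rightarrow> nat" where
  "f0' q = (if q mod 3 = 0 then q + 1 else 3 * ((q div 3 + s - 1) mod s) + 2)"

lemma iso0: "graph_iso {p \<in> {..<3*s}. p mod 3 \<noteq> 0} (induced_assoc (Bs s) {p \<in> {..<3*s}. p mod 3 \<noteq> 0})
   {p \<in> {..<3*s}. p mod 3 \<noteq> 2} (induced_assoc (Bs s) {p \<in> {..<3*s}. p mod 3 \<noteq> 2})"
proof (rule iso_lemma)
  have A: "f0 p < 3 * s \<and> f0 p mod 3 \<noteq> 2 \<and> f0' (f0 p) = p \<and>
      f0 p div 3 = (if p mod 3 = 1 then p div 3 else (p div 3 + 1) mod s) \<and>
      f0 p mod 3 = (if p mod 3 = 1 then 0 else 1) \<and> (p mod 3 = 1 \<or> p mod 3 = 2)"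
    if p: "p < 3 * s" "p mod 3 \<noteq> 0" for p
  proof (cases "p mod 3 = 1")
    case True
    then have f0e: "f0 p = p - 1" unfolding f0_def by simp
    have pe: "p = 3 * (p div 3) + 1" using True pdecomp[of p] by simp
    then have pm: "p - 1 = 3 * (p div 3)" by linarith
    have "(p - 1) mod 3 = 0" "(p - 1) div 3 = p div 3" unfolding pm by simp_all
    moreover have "p - 1 < 3 * s" "p - 1 + 1 = p" using p pe by linarith+
    ultimately show ?thesis unfolding f0'_def using True f0e by simp
  next
    case False
    have "p mod 3 < 3" by simp
    then have p2: "p mod 3 = 2" using p False by linarith
    define M where "M = (p div 3 + 1) mod s"
    have M: "M < s" unfolding M_def using s0 by simp
    have e: "f0 p = 3 * M + 1" unfolding f0_def M_def using p2 by simp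
    have "(3 * M + 1) div 3 = M" "(3 * M + 1) mod 3 = 1" by (rule div3, simp) (rule mod3, simp)
    moreover have "f0' (3 * M + 1) = 3 * ((M + s - 1) mod s) + 2"
      unfolding f0'_def using \<open>(3 * M + 1) div 3 = M\<close> \<open>(3 * M + 1) mod 3 = 1\<close> by simp
    moreover have "(M + s - 1) mod s = p div 3" unfolding M_def using modA1[of "p div 3"] p by simp
    moreover have "p = 3 * (p div 3) + 2" using p2 pdecomp[of p] by simp
    moreover have "3 * M + 1 < 3 * s" using M by simp
    ultimately show ?thesis using e p2 M_def by simp
  qed
  have B: "f0' q < 3 * s \<and> f0' q mod 3 \<noteq> 0 \<and> f0 (f0' q) = q"
    if q: "q < 3 * s" "q mod 3 \<noteq> 2" for q
  proof (cases "q mod 3 = 0")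
    case True
    then have f0e: "f0' q = q + 1" unfolding f0'_def by simp
    have qe: "q = 3 * (q div 3)" using True pdecomp[of q] by simp
    have qd: "q div 3 < s" using q by simp
    have q1: "q + 1 = 3 * (q div 3) + 1" using qe by linarith
    have "(q + 1) mod 3 = 1" unfolding q1 by (rule mod3) simp
    moreover have "q + 1 < 3 * s" "q + 1 - 1 = q" using qe qd by linarith+
    ultimately show ?thesis unfolding f0_def using f0e by simp
  next
    case False
    have "q mod 3 < 3" by simp
    then have q1: "q mod 3 = 1" using q False by linarith
    define N where "N = (q div 3 + s - 1) mod s"
    have N: "N < s" unfolding N_def using s0 by simp
    have e: "f0' q = 3 * N + 2" unfolding f0'_def N_def using q1 by simp
    have "(3 * N + 2) div 3 = N" "(3 * N + 2) mod 3 = 2" by (rule div3, simp) (rule mod3, simp)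
    moreover have "f0 (3 * N + 2) = 3 * ((N + 1) mod s) + 1"
      unfolding f0_def using \<open>(3 * N + 2) div 3 = N\<close> \<open>(3 * N + 2) mod 3 = 2\<close> by simp
    moreover have "(N + 1) mod s = q div 3" unfolding N_def using modA2[of "q div 3"] q by simp
    moreover have "q = 3 * (q div 3) + 1" using q1 pdecomp[of q] by simp
    moreover have "3 * N + 2 < 3 * s" using N by simp
    ultimately show ?thesis using e by simp
  qed
  show "bij_betw f0 {p \<in> {..<3*s}. p mod 3 \<noteq> 0} {p \<in> {..<3*s}. p mod 3 \<noteq> 2}"
  proof (rule bij_betw_byWitness[where f' = f0'])
    show "\<forall>a\<in>{p \<in> {..<3*s}. p mod 3 \<noteq> 0}. f0' (f0 a) = a" using A by auto
    show "\<forall>a\<in>{p \<in> {..<3*s}. p mod 3 \<noteq> 2}. f0 (f0' a) = a" using B by auto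
    show "f0 ` {p \<in> {..<3*s}. p mod 3 \<noteq> 0} \<subseteq> {p \<in> {..<3*s}. p mod 3 \<noteq> 2}" using A by auto
    show "f0' ` {p \<in> {..<3*s}. p mod 3 \<noteq> 2} \<subseteq> {p \<in> {..<3*s}. p mod 3 \<noteq> 0}" using B by auto
  qed
  fix x y assume x: "x \<in> {p \<in> {..<3*s}. p mod 3 \<noteq> 0}" and y: "y \<in> {p \<in> {..<3*s}. p mod 3 \<noteq> 0}"
  have px: "f0 x < 3 * s" "x < 3 * s" "x mod 3 = 1 \<or> x mod 3 = 2" using A[of x] x by auto
  have py: "f0 y < 3 * s" "y < 3 * s" "y mod 3 = 1 \<or> y mod 3 = 2" using A[of y] y by auto
  have c1: "f0 p div 3 = p div 3" "f0 p mod 3 = 0" if "p < 3 * s" "p mod 3 = 1" for p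
    using A[of p] that by auto
  have c2: "f0 p div 3 = (p div 3 + 1) mod s" "f0 p mod 3 = 1" if "p < 3 * s" "p mod 3 = 2" for p
    using A[of p] that by auto
  show "assoc_adj (Bs s) x y \<longleftrightarrow> assoc_adj (Bs s) (f0 x) (f0 y)"
    using px(3) py(3)
  proof (elim disjE)
    assume xm: "x mod 3 = 1" and ym: "y mod 3 = 1"
    show ?thesis unfolding adj_iff[OF px(2) py(2)] adj_iff[OF px(1) py(1)]
      c1[OF px(2) xm] c1[OF py(2) ym] xm ym by simp
  next
    assume xm: "x mod 3 = 2" and ym: "y mod 3 = 2"
    show ?thesis unfolding adj_iff[OF px(2) py(2)] adj_iff[OF px(1) py(1)]
      c2[OF px(2) xm] c2[OF py(2) ym] xm ym by simp
  next
    assume xm: "x mod 3 = 1" and ym: "y mod 3 = 2"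
    show ?thesis unfolding adj_iff[OF px(2) py(2)] adj_iff[OF px(1) py(1)]
      c1[OF px(2) xm] c2[OF py(2) ym] dvd_ms1 dvd_ms2 xm ym
      by (auto simp: ex3 off_def algebra_simps)
  next
    assume xm: "x mod 3 = 2" and ym: "y mod 3 = 1"
    show ?thesis unfolding adj_iff[OF px(2) py(2)] adj_iff[OF px(1) py(1)]
      c2[OF px(2) xm] c1[OF py(2) ym] dvd_ms1 dvd_ms2 xm ym
      by (auto simp: ex3 off_def algebra_simps)
  qed
qed

end

lemma iso_id: "graph_iso V E V E"
  unfolding graph_iso_def by (intro exI[of _ id]) (simp add: bij_betw_id)

theorem mainTheorem13:
  fixes s :: nat
  assumes "s \<ge> 3"
  shows "\<exists>(V :: nat set) (E :: nat \<Rightarrow> nat \<Rightarrow> bool) (P :: nat set) (B :: nat set set) (c :: nat \<Rightarrow> nat).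
           cubic_bipartite_graph V E \<and> card V = 2 * s \<and>
           sym_config_v3 P B \<and> card P = 3 * s \<and>
           strong_chromatic_number P B = 3 \<and>
           strong_colouring P B c 3 \<and>
           (\<forall>i<3. graph_iso {p\<in>P. c p \<noteq> i} (induced_assoc B {p\<in>P. c p \<noteq> i}) V E)"
proof -
  have isos: "\<forall>i<3. graph_iso {p \<in> {..<3*s}. p mod 3 \<noteq> i} (induced_assoc (Bs s) {p \<in> {..<3*s}. p mod 3 \<noteq> i})
     {p \<in> {..<3*s}. p mod 3 \<noteq> 2} (induced_assoc (Bs s) {p \<in> {..<3*s}. p mod 3 \<noteq> 2})"
  proof (intro allI impI)
    fix i :: nat assume "i < 3"
    then have "i = 0 \<or> i = 1 \<or> i = 2" by auto
    then show "graph_iso {p \<in> {..<3*s}. p mod 3 \<noteq> i} (induced_assoc (Bs s) {p \<in> {..<3*s}. p mod 3 \<noteq> i})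
     {p \<in> {..<3*s}. p mod 3 \<noteq> 2} (induced_assoc (Bs s) {p \<in> {..<3*s}. p mod 3 \<noteq> 2})"
      using iso0[OF assms] iso1[OF assms] iso_id by auto
  qed
  show ?thesis
    apply (rule exI[of _ "{p \<in> {..<3*s}. p mod 3 \<noteq> 2}"])
    apply (rule exI[of _ "induced_assoc (Bs s) {p \<in> {..<3*s}. p mod 3 \<noteq> 2}"])
    apply (rule exI[of _ "{..<3*s}"])
    apply (rule exI[of _ "Bs s"])
    apply (rule exI[of _ "\<lambda>p. p mod 3"])
    using cubic[OF assms] card_V[OF assms] config[OF assms] chrom[OF assms] colouring[OF assms] isos
    by simp
qed

end
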